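(* Let $u\le v$ in $S_n$ and let $I\subset[u,v]$ be a nonempty order ideal that is diamond-closed in $[u,v]$. Let $A_I$ be the set of atoms of $[u,v]$ (elements covering $u$) that lie in $I$. Then $I=\mathrm{dc}_{[u,v]}(\{u\}\cup A_I)$.
   Context: $S_n$ is the symmetric group with length $\ell$ (w.r.t. simple reflections $s_i=(i\ i{+}1)$), $T$ its transpositions. The Bruhat graph $\Gamma$ has vertex set $S_n$ and edges $w\to tw$ whenever $t\in T$, $\ell(w)<\ell(tw)$; Bruhat order is reachability in $\Gamma$. A diamond is a subgraph of $\Gamma$ with four distinct vertices $x_1,\dots,x_4$ and edges $x_1\to x_2\to x_4$, $x_1\to x_3\to x_4$. For $X\subset Y\subset S_n$, $X$ is diamond-closed in $Y$ if whenever $X$ contains three vertices of a diamond contained in $Y$ it contains the fourth. The diamond closure $\mathrm{dc}_Y(X)$ is the intersection of all sets $D$ with $X\subset D\subset Y$ that are diamond-closed in $Y$. *)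

theory Defs
  imports "HOL-Combinatorics.Permutations"
begin

definition Sn :: "nat \<Rightarrow> (nat \<Rightarrow> nat) set" where
  "Sn n = {w. w permutes {0..<n}}"

text \<open>Coxeter length w.r.t. adjacent transpositions = number of inversions.\<close>
definition len :: "nat \<Rightarrow> (nat \<Rightarrow> nat) \<Rightarrow> nat" where
  "len n w = card {(i, j). i < j \<and> j < n \<and> w j < w i}"

definition transp_set :: "nat \<Rightarrow> (nat \<Rightarrow> nat) set" where
  "transp_set n = {Transposition.transpose a b | a b. a < n \<and> b < n \<and> a \<noteq> b}"

definition bedge :: "nat \<Rightarrow> (nat \<Rightarrow> nat) \<Rightarrow> (nat \<Rightarrow> nat) \<Rightarrow> bool" where
  "bedge n w w' \<longleftrightarrow> w \<in> Sn n \<and> (\<exists>t \<in> transp_set n. w' = t \<circ> w) \<and> len n w < len n w'"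

definition bruhat_le :: "nat \<Rightarrow> (nat \<Rightarrow> nat) \<Rightarrow> (nat \<Rightarrow> nat) \<Rightarrow> bool" where
  "bruhat_le n u v \<longleftrightarrow> u \<in> Sn n \<and> (bedge n)\<^sup>*\<^sup>* u v"

definition bruhat_interval :: "nat \<Rightarrow> (nat \<Rightarrow> nat) \<Rightarrow> (nat \<Rightarrow> nat) \<Rightarrow> (nat \<Rightarrow> nat) set" where
  "bruhat_interval n u v = {w. bruhat_le n u w \<and> bruhat_le n w v}"

definition order_ideal_in :: "nat \<Rightarrow> (nat \<Rightarrow> nat) set \<Rightarrow> (nat \<Rightarrow> nat) set \<Rightarrow> bool" where
  "order_ideal_in n I Y \<longleftrightarrow> I \<subseteq> Y \<and> (\<forall>x\<in>I. \<forall>y\<in>Y. bruhat_le n y x \<longrightarrow> y \<in> I)"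

definition atoms :: "nat \<Rightarrow> (nat \<Rightarrow> nat) \<Rightarrow> (nat \<Rightarrow> nat) \<Rightarrow> (nat \<Rightarrow> nat) set" where
  "atoms n u v = {a \<in> bruhat_interval n u v. a \<noteq> u \<and>
      \<not> (\<exists>z. bruhat_le n u z \<and> bruhat_le n z a \<and> z \<noteq> u \<and> z \<noteq> a)}"

definition diamond :: "nat \<Rightarrow> (nat \<Rightarrow> nat) \<Rightarrow> (nat \<Rightarrow> nat) \<Rightarrow> (nat \<Rightarrow> nat) \<Rightarrow> (nat \<Rightarrow> nat) \<Rightarrow> bool" where
  "diamond n x1 x2 x3 x4 \<longleftrightarrow> distinct [x1, x2, x3, x4] \<and>
     bedge n x1 x2 \<and> bedge n x2 x4 \<and> bedge n x1 x3 \<and> bedge n x3 x4"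

definition diamond_closed :: "nat \<Rightarrow> (nat \<Rightarrow> nat) set \<Rightarrow> (nat \<Rightarrow> nat) set \<Rightarrow> bool" where
  "diamond_closed n X Y \<longleftrightarrow> (\<forall>x1 x2 x3 x4.
     diamond n x1 x2 x3 x4 \<and> {x1, x2, x3, x4} \<subseteq> Y \<and>
     card ({x1, x2, x3, x4} \<inter> X) \<ge> 3 \<longrightarrow> {x1, x2, x3, x4} \<subseteq> X)"

definition diamond_closure :: "nat \<Rightarrow> (nat \<Rightarrow> nat) set \<Rightarrow> (nat \<Rightarrow> nat) set \<Rightarrow> (nat \<Rightarrow> nat) set" where
  "diamond_closure n Y X = \<Inter> {D. X \<subseteq> D \<and> D \<subseteq> Y \<and> diamond_closed n D Y}"

end

theory Submission imports Defs begin

definition invs :: "nat \<Rightarrow> (nat \<Rightarrow> nat) \<Rightarrow> (nat \<times> nat) set" where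
  "invs n z = {(i, j). i < j \<and> j < n \<and> z j < z i}"

lemma len_invs: "len n z = card (invs n z)"
  by (simp add: len_def invs_def)

lemma finite_invs: "finite (invs n z)"
  by (rule finite_subset[of _ "{..<n} \<times> {..<n}"]) (auto simp: invs_def)

lemma len_up:
  assumes x: "x permutes {0..<n}" and pq: "p < n" "q < n" "p < q" "x p < x q"
  shows "len n x < len n (Transposition.transpose (x p) (x q) \<circ> x)"
proof -
  define s where "s = Transposition.transpose p q"
  define y where "y = Transposition.transpose (x p) (x q) \<circ> x"
  have inj: "inj x" using permutes_inj[OF x] .
  have yx: "y = x \<circ> s"
  proof
    fix k
    show "y k = (x \<circ> s) k"
    proof (cases "k = p \<or> k = q")
      case True then show ?thesis by (auto simp: y_def s_def)
    next
      case False
      then have "x k \<noteq> x p" "x k \<noteq> x q" using inj by (auto dest: injD)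
      then show ?thesis using False by (simp add: y_def s_def)
    qed
  qed
  define f where "f = (\<lambda>(k::nat,l::nat). if s k < s l then (s k, s l) else (k, l))"
  have ss: "s (s k) = k" for k by (simp add: s_def)
  have ff: "f (f (k,l)) = (k,l)" if "k < l" for k l
    using that by (auto simp: f_def ss)
  have sn: "s k < n \<longleftrightarrow> k < n" for k using pq by (auto simp: s_def transpose_def)
  have map: "f z \<in> invs n y" if zin: "z \<in> invs n x" for z
  proof -
    obtain k l where z: "z = (k,l)" "k < l" "l < n" "x l < x k" using zin unfolding invs_def by blast
    show ?thesis
    proof (cases "s k < s l")
      case True
      then show ?thesis using z sn ss by (auto simp: f_def invs_def yx)
    next
      case False
      have xk: "x k = x p \<longleftrightarrow> k = p" "x l = x p \<longleftrightarrow> l = p" "x k = x q \<longleftrightarrow> k = q" "x l = x q \<longleftrightarrow> l = q"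
        using inj by (auto dest: injD)
      have "y l < y k"
        using False z pq xk unfolding yx s_def
        by (auto simp: transpose_def split: if_splits)
      then show ?thesis using False z by (auto simp: f_def invs_def)
    qed
  qed
  have injf: "inj_on f (invs n x)"
    by (rule inj_onI) (metis (no_types, lifting) case_prodE ff invs_def mem_Collect_eq)
  have pqy: "(p,q) \<in> invs n y" using pq by (simp add: invs_def y_def)
  have pqn: "(p,q) \<notin> f ` invs n x"
  proof
    assume "(p,q) \<in> f ` invs n x"
    then obtain k l where kl: "(k,l) \<in> invs n x" "f (k,l) = (p,q)" by auto
    have "k < l" using kl by (auto simp: invs_def)
    then have "(k,l) = f (p,q)" using ff kl by metis
    also have "f (p,q) = (p,q)" using pq by (simp add: f_def s_def)
    finally show False using kl pq by (auto simp: invs_def)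
  qed
  have "card (invs n x) = card (f ` invs n x)" using injf by (simp add: card_image)
  also have "\<dots> < card (invs n y)"
    apply (rule psubset_card_mono[OF finite_invs])
    using map pqy pqn by blast
  finally show ?thesis by (simp add: len_invs y_def)
qed

lemma Sn_trans: "x \<in> Sn n \<Longrightarrow> a < n \<Longrightarrow> b < n \<Longrightarrow> Transposition.transpose a b \<circ> x \<in> Sn n"
  unfolding Sn_def mem_Collect_eq
  by (rule permutes_compose[OF _ permutes_swap_id]) auto

lemma pos_exists:
  assumes "x \<in> Sn n" "a < n" shows "\<exists>p<n. x p = a"
proof -
  have xp: "x permutes {0..<n}" using assms by (simp add: Sn_def)
  have "inv x a \<in> {0..<n}" using permutes_in_image[OF permutes_inv[OF xp], of a] assms(2) by simp
  moreover have "x (inv x a) = a" using permutes_inverses(1)[OF xp] .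
  ultimately show ?thesis by auto
qed

lemma len_sign:
  assumes x: "x permutes {0..<n}" and pq: "p < n" "q < n" "p \<noteq> q"
  shows "len n x < len n (Transposition.transpose (x p) (x q) \<circ> x) \<longleftrightarrow> ((p < q) \<longleftrightarrow> (x p < x q))"
proof -
  have inj: "inj x" using permutes_inj[OF x] .
  have xne: "x p \<noteq> x q" using inj pq by (auto dest: injD)
  define y where "y = Transposition.transpose (x p) (x q) \<circ> x"
  have y: "y permutes {0..<n}" unfolding y_def
    by (rule permutes_compose[OF x permutes_swap_id]) (use pq permutes_in_image[OF x, of p] permutes_in_image[OF x, of q] in simp_all)
  have yp: "y p = x q" "y q = x p" by (auto simp: y_def)
  have yx: "Transposition.transpose (y p) (y q) \<circ> y = x"
    by (rule ext) (simp add: y_def yp transpose_def)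
  show ?thesis
  proof (cases "p < q")
    case True
    show ?thesis
    proof (cases "x p < x q")
      case True
      then show ?thesis using len_up[OF x pq(1,2) \<open>p<q\<close>] \<open>p<q\<close> by simp
    next
      case False
      then have "y p < y q" using xne yp by simp
      from len_up[OF y pq(1,2) True this] yx have "len n y < len n x" by simp
      then show ?thesis using False True by (simp add: y_def)
    qed
  next
    case False
    then have qp: "q < p" using pq by simp
    show ?thesis
    proof (cases "x q < x p")
      case True
      from len_up[OF x pq(2,1) qp True] show ?thesis using True qp
        by (simp add: transpose_commute)
    next
      case False
      then have "y q < y p" using xne yp by simp
      from len_up[OF y pq(2,1) qp this] yx have "len n y < len n x"
        by (simp add: transpose_commute)
      then show ?thesis using False qp xne by (simp add: y_def)
    qed
  qed
qed

lemma bedge_pos: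
  assumes x: "x \<in> Sn n" and pq: "p < n" "q < n" "p \<noteq> q"
  shows "bedge n x (Transposition.transpose (x p) (x q) \<circ> x) \<longleftrightarrow> ((p < q) \<longleftrightarrow> (x p < x q))"
proof -
  have xp: "x permutes {0..<n}" using x by (simp add: Sn_def)
  have inj: "inj x" using permutes_inj[OF xp] .
  have "x p < n" using pq permutes_in_image[OF xp, of p] by simp
  moreover have "x q < n" using pq permutes_in_image[OF xp, of q] by simp
  moreover have "x p \<noteq> x q" using pq inj by (meson injD)
  ultimately have "Transposition.transpose (x p) (x q) \<in> transp_set n" unfolding transp_set_def by blast
  then show ?thesis using len_sign[OF xp pq] x unfolding bedge_def by blast
qed

lemma core:
  assumes x: "x \<in> Sn n" and p: "pa < n" "pb < n" "pc < n" "distinct [pa, pb, pc]"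
    and e1: "bedge n x (Transposition.transpose (x pa) (x pb) \<circ> x)"
    and e2: "bedge n (Transposition.transpose (x pa) (x pb) \<circ> x)
       (Transposition.transpose (x pb) (x pc) \<circ> (Transposition.transpose (x pa) (x pb) \<circ> x))"
  shows "\<exists>y'. y' \<noteq> Transposition.transpose (x pa) (x pb) \<circ> x \<and> bedge n x y' \<and>
     bedge n y' (Transposition.transpose (x pb) (x pc) \<circ> (Transposition.transpose (x pa) (x pb) \<circ> x))"
proof -
  have xp: "x permutes {0..<n}" using x by (simp add: Sn_def)
  have inj: "inj x" using permutes_inj[OF xp] .
  define a where "a = x pa"
  define b where "b = x pb"
  define c where "c = x pc"
  have abc: "a \<noteq> b" "a \<noteq> c" "b \<noteq> c" using p(4) unfolding a_def b_def c_def
    by (simp_all add: inj_eq[OF inj])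
  have lt: "a < n" "b < n" "c < n" using p permutes_in_image[OF xp, of pa] permutes_in_image[OF xp, of pb]
    permutes_in_image[OF xp, of pc] by (simp_all add: a_def b_def c_def)
  define y where "y = Transposition.transpose a b \<circ> x"
  define w where "w = Transposition.transpose b c \<circ> y"
  have yS: "y \<in> Sn n" using Sn_trans[OF x lt(1,2)] by (simp add: y_def)
  have ypa: "y pa = b" "y pc = c" using abc by (auto simp: y_def a_def b_def c_def)
  have H1: "(pa < pb) \<longleftrightarrow> (a < b)" using e1 bedge_pos[OF x p(1,2)] p(4) by (simp add: a_def b_def)
  have H2: "(pa < pc) \<longleftrightarrow> (b < c)" using e2 bedge_pos[OF yS p(1,3)] p(4) ypa
    by (simp add: a_def b_def c_def y_def)
  define yA where "yA = Transposition.transpose a c \<circ> x"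
  define yB where "yB = Transposition.transpose b c \<circ> x"
  have yAS: "yA \<in> Sn n" using Sn_trans[OF x lt(1,3)] by (simp add: yA_def)
  have yBS: "yB \<in> Sn n" using Sn_trans[OF x lt(2,3)] by (simp add: yB_def)
  have wA: "w = Transposition.transpose a b \<circ> yA"
    by (rule ext) (use abc in \<open>auto simp: w_def y_def yA_def transpose_def\<close>)
  have wB: "w = Transposition.transpose a c \<circ> yB"
    by (rule ext) (use abc in \<open>auto simp: w_def y_def yB_def transpose_def\<close>)
  have yAv: "yA pc = a" "yA pb = b" using abc by (auto simp: yA_def a_def b_def c_def)
  have yBv: "yB pa = a" "yB pb = c" using abc by (auto simp: yB_def a_def b_def c_def)
  have neA: "yA \<noteq> y"
  proof
    assume "yA = y" then have "yA pc = y pc" by simp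
    then show False using yAv ypa abc by simp
  qed
  have neB: "yB \<noteq> y"
  proof
    assume "yB = y" then have "yB pc = y pc" by simp
    then have "b = c" using abc by (simp add: yB_def y_def c_def[symmetric] a_def[symmetric] b_def[symmetric])
    then show False using abc by simp
  qed
  have A1: "bedge n x yA \<longleftrightarrow> ((pa < pc) \<longleftrightarrow> (a < c))"
    using bedge_pos[OF x p(1,3)] p(4) by (simp add: yA_def a_def c_def)
  have A2: "bedge n yA w \<longleftrightarrow> ((pc < pb) \<longleftrightarrow> (a < b))"
    using bedge_pos[OF yAS p(3,2)] p(4) yAv wA by (simp add: transpose_commute)
  have B1: "bedge n x yB \<longleftrightarrow> ((pb < pc) \<longleftrightarrow> (b < c))"
    using bedge_pos[OF x p(2,3)] p(4) by (simp add: yB_def b_def c_def)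
  have B2: "bedge n yB w \<longleftrightarrow> ((pa < pb) \<longleftrightarrow> (a < c))"
    using bedge_pos[OF yBS p(1,2)] p(4) yBv wB by simp
  have dp: "pa \<noteq> pb" "pa \<noteq> pc" "pb \<noteq> pc" using p(4) by auto
  have "(bedge n x yA \<and> bedge n yA w) \<or> (bedge n x yB \<and> bedge n yB w)"
    unfolding A1 A2 B1 B2 using H1 H2 abc dp
    by (cases "a<b"; cases "a<c"; cases "b<c"; cases "pa<pb"; cases "pa<pc"; cases "pb<pc") auto
  then show ?thesis using neA neB unfolding w_def y_def a_def b_def c_def by blast
qed

lemma core':
  assumes x: "x \<in> Sn n" and abc: "a < n" "b < n" "c < n" "distinct [a, b, c]"
    and e1: "bedge n x (Transposition.transpose a b \<circ> x)"
    and e2: "bedge n (Transposition.transpose a b \<circ> x)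
       (Transposition.transpose b c \<circ> (Transposition.transpose a b \<circ> x))"
  shows "\<exists>y'. y' \<noteq> Transposition.transpose a b \<circ> x \<and> bedge n x y' \<and>
     bedge n y' (Transposition.transpose b c \<circ> (Transposition.transpose a b \<circ> x))"
proof -
  obtain pa where pa: "pa < n" "x pa = a" using pos_exists[OF x abc(1)] by blast
  obtain pb where pb: "pb < n" "x pb = b" using pos_exists[OF x abc(2)] by blast
  obtain pc where pc: "pc < n" "x pc = c" using pos_exists[OF x abc(3)] by blast
  have d: "distinct [pa, pb, pc]" using abc(4) pa pb pc by auto
  show ?thesis using core[OF x pa(1) pb(1) pc(1) d] e1 e2 pa pb pc by simp
qed

lemma diamond_ex:
  assumes e1: "bedge n x y" and e2: "bedge n y w"
  shows "\<exists>y'. y' \<noteq> y \<and> bedge n x y' \<and> bedge n y' w"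
proof -
  from e1 obtain t1 where t1: "t1 \<in> transp_set n" "y = t1 \<circ> x" and x: "x \<in> Sn n"
    and l1: "len n x < len n y" unfolding bedge_def by blast
  from e2 obtain t2 where t2: "t2 \<in> transp_set n" "w = t2 \<circ> y" and y: "y \<in> Sn n"
    and l2: "len n y < len n w" unfolding bedge_def by blast
  obtain a b where ab: "t1 = Transposition.transpose a b" "a < n" "b < n" "a \<noteq> b"
    using t1(1) unfolding transp_set_def by blast
  obtain c d where cd: "t2 = Transposition.transpose c d" "c < n" "d < n" "c \<noteq> d"
    using t2(1) unfolding transp_set_def by blast
  have ta: "Transposition.transpose a b = Transposition.transpose b a" by (rule transpose_commute)
  have tc: "Transposition.transpose c d = Transposition.transpose d c" by (rule transpose_commute)
  show ?thesis
  proof (cases "(c = a \<and> d = b) \<or> (c = b \<and> d = a)")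
    case True
    then have "t2 = t1" using ab cd ta by auto
    then have "w = x" using t1 t2 ab by (simp add: comp_assoc[symmetric])
    then show ?thesis using l1 l2 by simp
  next
    case nt: False
    show ?thesis
    proof (cases "c \<in> {a, b} \<or> d \<in> {a, b}")
      case False
      obtain pa where pa: "pa < n" "x pa = a" using pos_exists[OF x ab(2)] by blast
      obtain pb where pb: "pb < n" "x pb = b" using pos_exists[OF x ab(3)] by blast
      obtain pc where pc: "pc < n" "x pc = c" using pos_exists[OF x cd(2)] by blast
      obtain pd where pd: "pd < n" "x pd = d" using pos_exists[OF x cd(3)] by blast
      have dab: "pa \<noteq> pb" using pa pb ab by auto
      have dcd: "pc \<noteq> pd" using pc pd cd by auto
      define y' where "y' = Transposition.transpose c d \<circ> x"
      have y'S: "y' \<in> Sn n" using Sn_trans[OF x cd(2,3)] by (simp add: y'_def)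
      have yv: "y pc = c" "y pd = d" using False t1 ab pc pd by auto
      have y'v: "y' pa = a" "y' pb = b" "y' pc = d" using False pa pb pc by (auto simp: y'_def)
      have ww: "w = Transposition.transpose a b \<circ> y'"
        by (rule ext) (use False in \<open>simp add: t2 t1 ab cd y'_def transpose_def\<close>)
      have B1: "bedge n x y \<longleftrightarrow> ((pa < pb) \<longleftrightarrow> (a < b))"
        using bedge_pos[OF x pa(1) pb(1) dab] pa pb t1 ab by simp
      have B2: "bedge n y w \<longleftrightarrow> ((pc < pd) \<longleftrightarrow> (c < d))"
        using bedge_pos[OF y pc(1) pd(1) dcd] yv t2 cd by simp
      have B3: "bedge n x y' \<longleftrightarrow> ((pc < pd) \<longleftrightarrow> (c < d))"
        using bedge_pos[OF x pc(1) pd(1) dcd] pc pd y'_def by simp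
      have B4: "bedge n y' w \<longleftrightarrow> ((pa < pb) \<longleftrightarrow> (a < b))"
        using bedge_pos[OF y'S pa(1) pb(1) dab] y'v ww by simp
      have "y' \<noteq> y" using y'v yv cd by auto
      then show ?thesis using B1 B2 B3 B4 e1 e2 by blast
    next
      case True
      consider "c = b" "d \<noteq> a" | "c = a" "d \<noteq> b" | "d = b" "c \<noteq> a" | "d = a" "c \<noteq> b"
        using True nt by blast
      then show ?thesis
      proof cases
        case 1
        have "distinct [a, b, d]" using 1 ab cd by auto
        from core'[OF x ab(2,3) cd(3) this] e1 e2 t1 t2 ab cd 1 show ?thesis by simp
      next
        case 2
        have "distinct [b, a, d]" using 2 ab cd by auto
        from core'[OF x ab(3,2) cd(3) this] e1 e2 t1 t2 ab cd 2 ta show ?thesis by simp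
      next
        case 3
        have "distinct [a, b, c]" using 3 ab cd by auto
        from core'[OF x ab(2,3) cd(2) this] e1 e2 t1 t2 ab cd 3 tc show ?thesis by simp
      next
        case 4
        have "distinct [b, a, c]" using 4 ab cd by auto
        from core'[OF x ab(3,2) cd(2) this] e1 e2 t1 t2 ab cd 4 ta tc show ?thesis by simp
      qed
    qed
  qed
qed

lemma bedge_len: "bedge n a b \<Longrightarrow> len n a < len n b"
  by (simp add: bedge_def)

lemma rt_len: "(bedge n)\<^sup>*\<^sup>* a b \<Longrightarrow> len n a \<le> len n b"
  by (induction rule: rtranclp_induct) (auto dest: bedge_len)

lemma bedge_Sn2: "bedge n a b \<Longrightarrow> b \<in> Sn n"
  unfolding bedge_def transp_set_def by (auto intro: Sn_trans)

lemma path2: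
  assumes "(bedge n)\<^sup>*\<^sup>* u z" "(bedge n)\<^sup>*\<^sup>* z w" "z \<noteq> u" "z \<noteq> w"
  shows "\<exists>x y. (bedge n)\<^sup>*\<^sup>* u x \<and> bedge n x y \<and> bedge n y w"
proof -
  obtain y where y: "(bedge n)\<^sup>*\<^sup>* z y" "bedge n y w"
    using assms(2,4) by (metis rtranclp.cases)
  obtain x' where x': "(bedge n)\<^sup>*\<^sup>* u x'" "bedge n x' z"
    using assms(1,3) by (metis rtranclp.cases)
  show ?thesis
  proof (cases "z = y")
    case True then show ?thesis using x' y by blast
  next
    case False
    obtain x'' where "(bedge n)\<^sup>*\<^sup>* z x''" "bedge n x'' y"
      using y(1) False by (metis rtranclp.cases)
    then show ?thesis using x' y
      by (meson rtranclp.rtrancl_into_rtrancl rtranclp_trans)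
  qed
qed

theorem lemma4p2:
  fixes n :: nat and u v :: "nat \<Rightarrow> nat" and I :: "(nat \<Rightarrow> nat) set"
  assumes "bruhat_le n u v"
    and "I \<noteq> {}"
    and "order_ideal_in n I (bruhat_interval n u v)"
    and "diamond_closed n I (bruhat_interval n u v)"
  shows "I = diamond_closure n (bruhat_interval n u v) ({u} \<union> (atoms n u v \<inter> I))"
proof -
  define Y where "Y = bruhat_interval n u v"
  define J where "J = {u} \<union> (atoms n u v \<inter> I)"
  have uS: "u \<in> Sn n" using assms(1) by (simp add: bruhat_le_def)
  have IY: "I \<subseteq> Y" using assms(3) by (simp add: order_ideal_in_def Y_def)
  have ideal: "\<And>x y. x \<in> I \<Longrightarrow> y \<in> Y \<Longrightarrow> bruhat_le n y x \<Longrightarrow> y \<in> I"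
    using assms(3) by (simp add: order_ideal_in_def Y_def)
  have uY: "u \<in> Y" using assms(1) uS by (simp add: Y_def bruhat_interval_def bruhat_le_def)
  have uI: "u \<in> I"
  proof -
    obtain w where "w \<in> I" using assms(2) by blast
    moreover have "bruhat_le n u w" using \<open>w \<in> I\<close> IY by (auto simp: Y_def bruhat_interval_def)
    ultimately show ?thesis using ideal uY by blast
  qed
  have sub1: "diamond_closure n Y J \<subseteq> I"
    unfolding diamond_closure_def
    by (rule Inter_lower) (use uI IY assms(4) in \<open>auto simp: J_def Y_def\<close>)
  have sub2: "I \<subseteq> D" if D: "J \<subseteq> D" "D \<subseteq> Y" "diamond_closed n D Y" for D
  proof -
    have "\<forall>w. len n w = m \<longrightarrow> w \<in> I \<longrightarrow> w \<in> D" for m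
    proof (induction m rule: less_induct)
      case (less m)
      show ?case
      proof (intro allI impI)
        fix w assume lw: "len n w = m" and wI: "w \<in> I"
        have wY: "w \<in> Y" using wI IY by blast
        then have uw: "bruhat_le n u w" and wv: "bruhat_le n w v" by (auto simp: Y_def bruhat_interval_def)
        show "w \<in> D"
        proof (cases "w = u \<or> w \<in> atoms n u v")
          case True then show ?thesis using D(1) wI by (auto simp: J_def)
        next
          case False
          then obtain z where z: "bruhat_le n u z" "bruhat_le n z w" "z \<noteq> u" "z \<noteq> w"
            using wY by (auto simp: atoms_def Y_def)
          obtain x y where xy: "(bedge n)\<^sup>*\<^sup>* u x" "bedge n x y" "bedge n y w"
            using path2[of n u z w] z by (auto simp: bruhat_le_def)
          obtain y' where y': "y' \<noteq> y" "bedge n x y'" "bedge n y' w"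
            using diamond_ex[OF xy(2,3)] by blast
          have wvr: "(bedge n)\<^sup>*\<^sup>* w v" using wv by (simp add: bruhat_le_def)
          have xS: "x \<in> Sn n" using xy(2) by (simp add: bedge_def)
          have yS: "y \<in> Sn n" using xy(3) by (simp add: bedge_def)
          have y'S: "y' \<in> Sn n" using y'(3) by (simp add: bedge_def)
          have ux: "bruhat_le n u x" using xy(1) uS by (simp add: bruhat_le_def)
          have uy: "bruhat_le n u y" using xy(1,2) uS
            by (simp add: bruhat_le_def rtranclp.rtrancl_into_rtrancl)
          have uy': "bruhat_le n u y'" using xy(1) y'(2) uS
            by (simp add: bruhat_le_def rtranclp.rtrancl_into_rtrancl)
          have xw: "bruhat_le n x w" using xy(2,3) xS
            by (simp add: bruhat_le_def)
          have yw: "bruhat_le n y w" using xy(3) yS by (simp add: bruhat_le_def)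
          have y'w: "bruhat_le n y' w" using y'(3) y'S by (simp add: bruhat_le_def)
          have toY: "q \<in> Y" if "bruhat_le n u q" "bruhat_le n q w" for q
            using that wvr unfolding Y_def bruhat_interval_def bruhat_le_def
            by (simp, meson rtranclp_trans)
          have xI: "x \<in> I" using ideal[OF wI toY[OF ux xw] xw] .
          have yI: "y \<in> I" using ideal[OF wI toY[OF uy yw] yw] .
          have y'I: "y' \<in> I" using ideal[OF wI toY[OF uy' y'w] y'w] .
          have lens: "len n x < len n y" "len n y < len n w" "len n x < len n y'" "len n y' < len n w"
            using xy y' by (auto dest: bedge_len)
          have xD: "x \<in> D" using less.IH[of "len n x"] lens lw xI by auto
          have yD: "y \<in> D" using less.IH[of "len n y"] lens lw yI by auto
          have y'D: "y' \<in> D" using less.IH[of "len n y'"] lens lw y'I by auto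
          have dia: "diamond n x y y' w" unfolding diamond_def
            using lens y' xy by auto
          have inY: "{x, y, y', w} \<subseteq> Y" using xI yI y'I wI IY by auto
          have dist: "distinct [x, y, y']" using lens y' by auto
          have "3 \<le> card {x, y, y'}" using dist by simp
          also have "card {x, y, y'} \<le> card ({x, y, y', w} \<inter> D)"
            by (rule card_mono) (use xD yD y'D in auto)
          finally have "3 \<le> card ({x, y, y', w} \<inter> D)" .
          then have "{x, y, y', w} \<subseteq> D" using D(3) dia inY unfolding diamond_closed_def by blast
          then show ?thesis by simp
        qed
      qed
    qed
    then show ?thesis by blast
  qed
  have sub3: "I \<subseteq> diamond_closure n Y J"
    unfolding diamond_closure_def using sub2 by blast
  show ?thesis using sub1 sub3 by (simp add: Y_def J_def)
qed

end
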